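(* Let $0\le t\le s$ and $m,n\ge1$ be integers. If there exist a $(t,s,n)$-AONT and a $(t,s,m)$-AONT, then there exists a $(t,s,mn)$-AONT.
   Context: Let $X$ be a finite alphabet with $|X|=v$ and $0\le t\le s$. A $(t,s,v)$-AONT is a bijection $\phi:X^s\to X^s$ such that for every $I\subseteq\{1,\dots,s\}$ with $|I|=t$ and every $J\subseteq\{1,\dots,s\}$ with $|J|=s-t$, the map $x\mapsto\big((x_i)_{i\in I},(\phi(x)_j)_{j\in J}\big)$ is a bijection $X^s\to X^t\times X^{s-t}$ (i.e. fixing any $s-t$ outputs leaves any $t$ inputs completely undetermined). *)

theory Defs
  imports "HOL-Library.FuncSet"
begin

abbreviation words :: "nat \<Rightarrow> 'a set \<Rightarrow> (nat \<Rightarrow> 'a) set" where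
  "words s X \<equiv> {1..s} \<rightarrow>\<^sub>E X"

text \<open>phi is a (t,s,v)-AONT over alphabet X (with v = card X).\<close>
definition is_AONT :: "nat \<Rightarrow> nat \<Rightarrow> 'a set \<Rightarrow> ((nat \<Rightarrow> 'a) \<Rightarrow> (nat \<Rightarrow> 'a)) \<Rightarrow> bool" where
  "is_AONT t s X \<phi> \<longleftrightarrow>
     bij_betw \<phi> (words s X) (words s X) \<and>
     (\<forall>I J. I \<subseteq> {1..s} \<longrightarrow> card I = t \<longrightarrow> J \<subseteq> {1..s} \<longrightarrow> card J = s - t \<longrightarrow>
        bij_betw (\<lambda>x. (restrict x I, restrict (\<phi> x) J)) (words s X)
                 ((I \<rightarrow>\<^sub>E X) \<times> (J \<rightarrow>\<^sub>E X)))"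

end

theory Submission
  imports Defs
begin

definition pr :: "nat set \<Rightarrow> (nat\<Rightarrow>'a)\<times>(nat\<Rightarrow>'b) \<Rightarrow> nat \<Rightarrow> 'a\<times>'b" where
  "pr A uv = restrict (\<lambda>i. (fst uv i, snd uv i)) A"

definition up :: "nat set \<Rightarrow> (nat \<Rightarrow> 'a\<times>'b) \<Rightarrow> (nat\<Rightarrow>'a)\<times>(nat\<Rightarrow>'b)" where
  "up A z = (restrict (fst \<circ> z) A, restrict (snd \<circ> z) A)"

definition sh :: "('p\<times>'q)\<times>('r\<times>'u) \<Rightarrow> ('p\<times>'r)\<times>('q\<times>'u)" where
  "sh x = ((fst (fst x), fst (snd x)), (snd (fst x), snd (snd x)))"

lemma up_pr: "uv \<in> (A\<rightarrow>\<^sub>E X) \<times> (A\<rightarrow>\<^sub>E Y) \<Longrightarrow> up A (pr A uv) = uv"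
  unfolding up_def pr_def by (cases uv) (auto simp: fun_eq_iff PiE_def extensional_def)

lemma pr_up: "z \<in> (A\<rightarrow>\<^sub>E X \<times> Y) \<Longrightarrow> pr A (up A z) = z"
  unfolding up_def pr_def by (auto simp: fun_eq_iff PiE_def extensional_def)

lemma pr_in: "uv \<in> (A\<rightarrow>\<^sub>E X) \<times> (A\<rightarrow>\<^sub>E Y) \<Longrightarrow> pr A uv \<in> (A\<rightarrow>\<^sub>E X \<times> Y)"
  unfolding pr_def by (cases uv) auto

lemma up_in: "z \<in> (A\<rightarrow>\<^sub>E X \<times> Y) \<Longrightarrow> up A z \<in> (A\<rightarrow>\<^sub>E X) \<times> (A\<rightarrow>\<^sub>E Y)"
  unfolding up_def by (auto simp: PiE_def Pi_def mem_Times_iff)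

lemma bij_pr: "bij_betw (pr A) ((A\<rightarrow>\<^sub>E X) \<times> (A\<rightarrow>\<^sub>E Y)) (A\<rightarrow>\<^sub>E X \<times> Y)"
  by (rule bij_betw_byWitness[where f'="up A"]) (simp_all add: image_subset_iff up_pr pr_up pr_in up_in del: mem_Times_iff)

lemma bij_up: "bij_betw (up A) (A\<rightarrow>\<^sub>E X \<times> Y) ((A\<rightarrow>\<^sub>E X) \<times> (A\<rightarrow>\<^sub>E Y))"
  by (rule bij_betw_byWitness[where f'="pr A"]) (simp_all add: image_subset_iff up_pr pr_up pr_in up_in del: mem_Times_iff)

lemma bij_sh: "bij_betw sh ((A\<times>B)\<times>(C\<times>D)) ((A\<times>C)\<times>(B\<times>D))"
  by (rule bij_betw_byWitness[where f'="sh"]) (auto simp: sh_def)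

lemma restrict_pr: "B \<subseteq> A \<Longrightarrow> restrict (pr A uv) B = pr B (restrict (fst uv) B, restrict (snd uv) B)"
  unfolding pr_def by (auto simp: fun_eq_iff)

theorem lemma3p1:
  fixes t s m n :: nat and X :: "'a set" and Y :: "'b set"
  assumes "t \<le> s" and "m \<ge> 1" and "n \<ge> 1"
    and "finite X" and "card X = n" and "\<exists>\<phi>. is_AONT t s X \<phi>"
    and "finite Y" and "card Y = m" and "\<exists>\<psi>. is_AONT t s Y \<psi>"
  shows "\<exists>(Z :: ('a \<times> 'b) set) \<chi>. finite Z \<and> card Z = m * n \<and> is_AONT t s Z \<chi>"
proof -
  obtain \<phi> where P: "is_AONT t s X \<phi>" using assms by blast
  obtain \<psi> where Q: "is_AONT t s Y \<psi>" using assms by blast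
  define S where "S = {1..s}"
  define \<chi> where "\<chi> z = pr S (\<phi> (fst (up S z)), \<psi> (snd (up S z)))" for z
  have chi_pr: "\<chi> (pr S uv) = pr S (map_prod \<phi> \<psi> uv)"
    if "uv \<in> (S\<rightarrow>\<^sub>E X) \<times> (S\<rightarrow>\<^sub>E Y)" for uv
    using that by (simp add: \<chi>_def up_pr map_prod_def split_beta)
  have b1: "bij_betw \<chi> (words s (X\<times>Y)) (words s (X\<times>Y))"
  proof -
    have "bij_betw (pr S \<circ> map_prod \<phi> \<psi> \<circ> up S) (S\<rightarrow>\<^sub>E X \<times> Y) (S\<rightarrow>\<^sub>E X \<times> Y)"
      apply (rule bij_betw_trans[OF bij_up])
      apply (rule bij_betw_trans[OF _ bij_pr])
      apply (rule bij_betw_map_prod)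
      using P Q unfolding is_AONT_def S_def by blast+
    moreover have "\<chi> = (pr S \<circ> map_prod \<phi> \<psi> \<circ> up S)"
      by (rule ext) (simp add: \<chi>_def map_prod_def split_beta)
    ultimately show ?thesis unfolding S_def by simp
  qed
  have b2: "bij_betw (\<lambda>x. (restrict x I, restrict (\<chi> x) J)) (words s (X\<times>Y))
                 ((I \<rightarrow>\<^sub>E X\<times>Y) \<times> (J \<rightarrow>\<^sub>E X\<times>Y))"
    if I: "I \<subseteq> {1..s}" "card I = t" and J: "J \<subseteq> {1..s}" "card J = s - t" for I J
  proof -
    define FX where "FX = (\<lambda>x. (restrict x I, restrict (\<phi> x) J))"
    define FY where "FY = (\<lambda>x. (restrict x I, restrict (\<psi> x) J))"
    have bx: "bij_betw FX (S\<rightarrow>\<^sub>E X) ((I \<rightarrow>\<^sub>E X) \<times> (J \<rightarrow>\<^sub>E X))"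
      using P I J unfolding is_AONT_def FX_def S_def by blast
    have by': "bij_betw FY (S\<rightarrow>\<^sub>E Y) ((I \<rightarrow>\<^sub>E Y) \<times> (J \<rightarrow>\<^sub>E Y))"
      using Q I J unfolding is_AONT_def FY_def S_def by blast
    define G where "G = map_prod (pr I) (pr J) \<circ> sh \<circ> map_prod FX FY"
    have bG: "bij_betw G ((S\<rightarrow>\<^sub>E X) \<times> (S\<rightarrow>\<^sub>E Y)) ((I \<rightarrow>\<^sub>E X\<times>Y) \<times> (J \<rightarrow>\<^sub>E X\<times>Y))"
      unfolding G_def
      by (rule bij_betw_trans[OF bij_betw_map_prod[OF bx by'] bij_betw_trans[OF bij_sh
         bij_betw_map_prod[OF bij_pr bij_pr]]])
    have bGu: "bij_betw (G \<circ> up S) (S\<rightarrow>\<^sub>E X \<times> Y) ((I \<rightarrow>\<^sub>E X\<times>Y) \<times> (J \<rightarrow>\<^sub>E X\<times>Y))"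
      by (rule bij_betw_trans[OF bij_up bG])
    have IS: "I \<subseteq> S" "J \<subseteq> S" using I J S_def by auto
    have eq': "(\<lambda>x. (restrict x I, restrict (\<chi> x) J)) (pr S uv) = G uv"
      if u: "uv \<in> (S\<rightarrow>\<^sub>E X) \<times> (S\<rightarrow>\<^sub>E Y)" for uv
      apply (simp only: chi_pr[OF u] restrict_pr[OF IS(1)] restrict_pr[OF IS(2)])
      apply (simp add: G_def sh_def FX_def FY_def map_prod_def split_beta)
      done
    have eq: "(\<lambda>x. (restrict x I, restrict (\<chi> x) J)) z = (G \<circ> up S) z"
      if z: "z \<in> S\<rightarrow>\<^sub>E X \<times> Y" for z
      using eq'[OF up_in[OF z]] pr_up[OF z] by simp
    have "bij_betw (\<lambda>x. (restrict x I, restrict (\<chi> x) J)) (S\<rightarrow>\<^sub>E X \<times> Y)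
                 ((I \<rightarrow>\<^sub>E X\<times>Y) \<times> (J \<rightarrow>\<^sub>E X\<times>Y))"
      by (subst bij_betw_cong[where g="G \<circ> up S"]) (auto simp only: eq bGu)
    then show ?thesis unfolding S_def .
  qed
  show ?thesis
    apply (rule exI[of _ "X\<times>Y"], rule exI[of _ \<chi>])
    using assms b1 b2 by (auto simp: is_AONT_def card_cartesian_product)
qed

end
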